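(* Let $G$ be a simple connected graph with $n$ vertices and $m$ edges, let $k\ge1$ be an integer, and let $S_{2k}(G)$ be the $2k$-parallel subdivision graph of $G$. If $\zeta\notin\{\frac12,\frac32\}$ is an eigenvalue of $\mathscr{L}(S_{2k}(G))$, then $\zeta(4\zeta^2-12\zeta+9)$ is an eigenvalue of $\mathscr{L}(G)$, and its multiplicity is the same as that of $\zeta$.
   Context: For a graph $H$ with adjacency matrix $A(H)$ and diagonal degree matrix $D(H)$ (no isolated vertices), the normalized Laplacian is $\mathscr{L}(H)=I-D(H)^{-1/2}A(H)D(H)^{-1/2}$. The $2k$-parallel subdivision graph $S_{2k}(G)$ is obtained from $G$ by replacing each edge $uv$ of $G$ by $k$ internally disjoint paths $u-w_1-w_2-v$ of length $3$ (each with its own two new internal vertices). *)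

theory Defs
  imports Main "Jordan_Normal_Form.Char_Poly"
begin

text \<open>A graph is given by a vertex set V and a set E of edges, each edge being a
  two-element set of vertices.\<close>

definition simple_graph :: "'a set \<Rightarrow> 'a set set \<Rightarrow> bool" where
  "simple_graph V E \<longleftrightarrow> finite V \<and>
     (\<forall>e\<in>E. \<exists>u v. e = {u, v} \<and> u \<noteq> v \<and> u \<in> V \<and> v \<in> V)"

definition connected_graph :: "'a set \<Rightarrow> 'a set set \<Rightarrow> bool" where
  "connected_graph V E \<longleftrightarrow> V \<noteq> {} \<and>
     (\<forall>u\<in>V. \<forall>v\<in>V. (u, v) \<in> {(x, y). {x, y} \<in> E}\<^sup>*)"

definition no_isolated_vertices :: "'a set \<Rightarrow> 'a set set \<Rightarrow> bool" where
  "no_isolated_vertices V E \<longleftrightarrow> (\<forall>v\<in>V. \<exists>e\<in>E. v \<in> e)"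

definition degree :: "'a set \<Rightarrow> 'a set set \<Rightarrow> 'a \<Rightarrow> nat" where
  "degree V E u = card {v \<in> V. {u, v} \<in> E}"

text \<open>Entries of the normalized Laplacian  I - D^(-1/2) A D^(-1/2).\<close>
definition nlap_entry :: "'a set \<Rightarrow> 'a set set \<Rightarrow> 'a \<Rightarrow> 'a \<Rightarrow> real" where
  "nlap_entry V E u v =
     (if u = v then 1 else 0)
     - (if {u, v} \<in> E then 1 / sqrt (real (degree V E u) * real (degree V E v)) else 0)"

text \<open>A fixed enumeration of the (finite) vertex set; the spectrum does not depend on it.\<close>
definition vertex_list :: "'a set \<Rightarrow> 'a list" where
  "vertex_list V = (SOME xs. distinct xs \<and> set xs = V)"

definition nlap :: "'a set \<Rightarrow> 'a set set \<Rightarrow> real mat" where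
  "nlap V E = (let xs = vertex_list V in
     mat (length xs) (length xs) (\<lambda>(i, j). nlap_entry V E (xs ! i) (xs ! j)))"

text \<open>The 2k-parallel subdivision graph. Original vertices are Inl u; for each edge {u,v}
  and each i < k, the path number i is  u - Inr (u,v,i) - Inr (v,u,i) - v.\<close>
definition subdiv_vertices :: "'a set \<Rightarrow> 'a set set \<Rightarrow> nat \<Rightarrow> ('a + 'a \<times> 'a \<times> nat) set" where
  "subdiv_vertices V E k =
     Inl ` V \<union> {Inr (u, v, i) | u v i. {u, v} \<in> E \<and> i < k}"

definition subdiv_edges :: "'a set \<Rightarrow> 'a set set \<Rightarrow> nat \<Rightarrow> ('a + 'a \<times> 'a \<times> nat) set set" where
  "subdiv_edges V E k =
     {{Inl u, Inr (u, v, i)} | u v i. {u, v} \<in> E \<and> i < k}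
     \<union> {{Inr (u, v, i), Inr (v, u, i)} | u v i. {u, v} \<in> E \<and> i < k}"

end

theory Submission
  imports Defs "Jordan_Normal_Form.Jordan_Normal_Form_Uniqueness" "Jordan_Normal_Form.Jordan_Normal_Form_Existence"
begin

hide_const (open) Coset.order




lemma herm_scalar:
  fixes M :: "complex mat"
  assumes M: "M \<in> carrier_mat n n" and herm: "\<And>i j. i < n \<Longrightarrow> j < n \<Longrightarrow> M $$ (i,j) = conjugate (M $$ (j,i))"
    and v: "v \<in> carrier_vec n" and w: "w \<in> carrier_vec n"
  shows "(M *\<^sub>v v) \<bullet>c w = v \<bullet>c (M *\<^sub>v w)"
proof -
  have hc: "conjugate (M $$ (j,i)) = M $$ (i,j)" if "i < n" "j < n" for i j
    using herm[OF that] by simp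
  have "(M *\<^sub>v v) \<bullet>c w = (\<Sum>i<n. (\<Sum>j<n. M $$ (i,j) * v $ j) * conjugate (w $ i))"
    using M v w by (simp add: scalar_prod_def mult_mat_vec_def lessThan_atLeast0 row_def)
  also have "\<dots> = (\<Sum>i<n. \<Sum>j<n. v $ j * (M $$ (i,j) * conjugate (w $ i)))"
    by (simp add: sum_distrib_left sum_distrib_right mult_ac)
  also have "\<dots> = (\<Sum>j<n. \<Sum>i<n. v $ j * (M $$ (i,j) * conjugate (w $ i)))"
    by (rule sum.swap)
  also have "\<dots> = (\<Sum>j<n. v $ j * conjugate (\<Sum>i<n. M $$ (j,i) * w $ i))"
    using hc by (auto simp: sum_distrib_left intro!: sum.cong)
  also have "\<dots> = v \<bullet>c (M *\<^sub>v w)"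
    using M v w by (simp add: scalar_prod_def mult_mat_vec_def lessThan_atLeast0 row_def)
  finally show ?thesis .
qed

lemma herm_kernel_sq:
  fixes M :: "complex mat"
  assumes M: "M \<in> carrier_mat n n" and herm: "\<And>i j. i < n \<Longrightarrow> j < n \<Longrightarrow> M $$ (i,j) = conjugate (M $$ (j,i))"
  shows "mat_kernel (M * M) = mat_kernel M"
proof
  show "mat_kernel M \<subseteq> mat_kernel (M * M)"
    using M by (auto simp: mat_kernel_def assoc_mult_mat_vec[symmetric])
next
  show "mat_kernel (M * M) \<subseteq> mat_kernel M"
  proof
    fix v assume "v \<in> mat_kernel (M * M)"
    hence v: "v \<in> carrier_vec n" and 0: "M *\<^sub>v (M *\<^sub>v v) = 0\<^sub>v n"
      using M by (auto simp: mat_kernel_def assoc_mult_mat_vec)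
    have Mv: "M *\<^sub>v v \<in> carrier_vec n" using M v by auto
    have "(M *\<^sub>v v) \<bullet>c (M *\<^sub>v v) = v \<bullet>c (M *\<^sub>v (M *\<^sub>v v))"
      by (rule herm_scalar[OF M herm v Mv])
    also have "\<dots> = 0" unfolding 0 using v by simp
    finally have "M *\<^sub>v v = 0\<^sub>v n" using conjugate_square_eq_0_vec[OF Mv] by simp
    thus "v \<in> mat_kernel M" using v M by (auto simp: mat_kernel_def)
  qed
qed

lemma sum_list_min_eq:
  fixes L :: "nat list"
  assumes "sum_list (map (min 2) L) = sum_list (map (min 1) L)"
  shows "sum_list L = sum_list (map (min 1) L)"
  using assms
proof (induct L)
  case (Cons a L)
  have "sum_list (map (min 1) L) \<le> sum_list (map (min 2) L)"
    by (induct L) auto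
  moreover have "min 1 a \<le> min 2 a" by simp
  ultimately have "min 2 a = min 1 a" "sum_list (map (min 2) L) = sum_list (map (min 1) L)"
    using Cons.prems by auto
  with Cons.hyps show ?case by auto
qed simp

lemma herm_order:
  fixes A :: "complex mat"
  assumes A: "A \<in> carrier_mat n n" and herm: "\<And>i j. i < n \<Longrightarrow> j < n \<Longrightarrow> A $$ (i,j) = conjugate (A $$ (j,i))"
    and lam: "conjugate lam = lam"
  shows "order lam (char_poly A) = kernel_dim (char_matrix A lam)"
proof -
  define M where "M = char_matrix A lam"
  have M: "M \<in> carrier_mat n n" using A unfolding M_def by auto
  have hM: "M $$ (i,j) = conjugate (M $$ (j,i))" if "i < n" "j < n" for i j
    using that A herm[OF that] lam unfolding M_def char_matrix_def by auto
  from char_poly_factorized[OF A] obtain as where "char_poly A = (\<Prod> a \<leftarrow> as. [:- a, 1:])" by auto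
  from jordan_nf_exists[OF A this] obtain n_as where jnf: "jordan_nf A n_as" ..
  define L where "L = map fst [(n, e)\<leftarrow>n_as . e = lam]"
  have p1: "M ^\<^sub>m 1 = M" using M by simp
  have p2: "M ^\<^sub>m 2 = M * M" using M by (simp add: numeral_2_eq_2)
  have d1: "dim_gen_eigenspace A lam 1 = kernel_dim M"
    unfolding dim_gen_eigenspace_def M_def[symmetric] p1 ..
  have d2: "dim_gen_eigenspace A lam 2 = kernel_dim M"
    unfolding dim_gen_eigenspace_def M_def[symmetric] p2 kernel_dim_def
    using M by (simp add: herm_kernel_sq[OF M hM])
  have "sum_list (map (min 2) L) = sum_list (map (min 1) L)"
    using dim_gen_eigenspace[OF jnf, of lam 1] dim_gen_eigenspace[OF jnf, of lam 2] d1 d2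
    unfolding L_def by (simp add: sum_list_sum_nth)
  hence "sum_list L = sum_list (map (min 1) L)" by (rule sum_list_min_eq)
  moreover have "order lam (char_poly A) = sum_list L"
    unfolding jordan_nf_order[OF jnf] L_def
    by (induct n_as) auto
  ultimately show ?thesis using dim_gen_eigenspace[OF jnf, of lam 1] d1 unfolding L_def M_def
    by (simp add: sum_list_sum_nth)
qed





lemma kernel_dim_iso:
  fixes A1 :: "'a::field mat"
  assumes A1: "A1 \<in> carrier_mat r1 c1" and A2: "A2 \<in> carrier_mat r2 c2" and R: "R \<in> carrier_mat c2 c1"
    and maps: "\<And>v. v \<in> mat_kernel A1 \<Longrightarrow> R *\<^sub>v v \<in> mat_kernel A2"
    and inj: "inj_on ((*\<^sub>v) R) (mat_kernel A1)"
    and surj: "\<And>w. w \<in> mat_kernel A2 \<Longrightarrow> \<exists>v\<in>mat_kernel A1. w = R *\<^sub>v v"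
  shows "kernel_dim A1 = kernel_dim A2"
proof -
  interpret K1: kernel r1 c1 A1 by (unfold_locales, rule A1)
  interpret K2: kernel r2 c2 A2 by (unfold_locales, rule A2)
  have k1: "v \<in> carrier_vec c1" if "v \<in> mat_kernel A1" for v using that A1 by (auto simp: mat_kernel_def)
  interpret lm: linear_map class_ring K1.VK K2.VK "(*\<^sub>v) R"
  proof (intro linear_map.intro)
    show "vectorspace class_ring K1.VK" by (rule K1.Ker.vectorspace_axioms)
    show "vectorspace class_ring K2.VK" by (rule K2.Ker.vectorspace_axioms)
    show "mod_hom class_ring K1.VK K2.VK ((*\<^sub>v) R)"
    proof (intro mod_hom.intro)
      show "module class_ring K1.VK" by (rule K1.Ker.module_axioms)
      show "module class_ring K2.VK" by (rule K2.Ker.module_axioms)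
      show "mod_hom_axioms class_ring K1.VK K2.VK ((*\<^sub>v) R)"
        unfolding mod_hom_axioms_def module_hom_def
        using maps k1 R by (auto simp: mult_add_distrib_mat_vec mult_mat_vec)
    qed
  qed
  from kernel_basis_exists[OF A1] obtain B where B: "finite B" "K1.basis B" by auto
  have fd: "K1.Ker.fin_dim" unfolding K1.Ker.fin_dim_def
    using B by (auto simp: K1.Ker.basis_def)
  have "K1.dim = K2.dim"
  proof (rule lm.dim_eq[OF fd])
    show "inj_on ((*\<^sub>v) R) (carrier K1.VK)" using inj by simp
    show "(*\<^sub>v) R ` carrier K1.VK = carrier K2.VK" using maps surj by auto
  qed
  thus ?thesis using A1 A2 by (simp add: kernel_dim_def)
qed





lemma vertex_list: assumes "finite W"
  shows "distinct (vertex_list W) \<and> set (vertex_list W) = W"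
proof -
  obtain xs0 where "set xs0 = W" "distinct xs0" using finite_distinct_list[OF assms] by blast
  thus ?thesis unfolding vertex_list_def
    by (intro someI[where P="\<lambda>xs. distinct xs \<and> set xs = W"]) auto
qed

lemma find_index_nth: assumes "distinct xs" "i < length xs" shows "find_index xs (xs ! i) = i"
proof -
  have "find_index xs (xs ! i) < length xs" using assms by (simp add: find_index_leq_length)
  moreover have "xs ! (find_index xs (xs ! i)) = xs ! i" using assms by (simp add: find_index_in_set)
  ultimately show ?thesis using assms nth_eq_iff_index_eq by blast
qed

lemma nlap_carrier: "nlap W F \<in> carrier_mat (length (vertex_list W)) (length (vertex_list W))"
  unfolding nlap_def Let_def by simp

lemma nlap_index: "i < length (vertex_list W) \<Longrightarrow> j < length (vertex_list W) \<Longrightarrow>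
  nlap W F $$ (i,j) = nlap_entry W F (vertex_list W ! i) (vertex_list W ! j)"
  unfolding nlap_def Let_def by simp

lemma nlap_entry_sym: "nlap_entry W F x y = nlap_entry W F y x"
  unfolding nlap_entry_def by (auto simp: insert_commute mult.commute)

lemma sum_nth_set:
  assumes "distinct xs"
  shows "(\<Sum>j<length xs. g (xs ! j)) = (\<Sum>y\<in>set xs. g y)"
  using sum.reindex_bij_betw[OF bij_betw_nth[OF assms refl refl], of g]
  by (simp add: lessThan_atLeast0)

lemma matvec_fun:
  fixes F :: "'v set set" and W :: "'v set"
  defines "xs \<equiv> vertex_list W"
  assumes fin: "finite W" and v: "v \<in> carrier_vec (length xs)"
    and g: "\<And>y. y \<in> W \<Longrightarrow> g y = v $ find_index xs y" and i: "i < length xs"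
  shows "(map_mat complex_of_real (nlap W F) *\<^sub>v v) $ i
     = (\<Sum>y\<in>W. complex_of_real (nlap_entry W F (xs ! i) y) * g y)"
proof -
  from vertex_list[OF fin] have d: "distinct xs" and s: "set xs = W" unfolding xs_def by auto
  have "(map_mat complex_of_real (nlap W F) *\<^sub>v v) $ i
     = (\<Sum>j<length xs. complex_of_real (nlap_entry W F (xs ! i) (xs ! j)) * v $ j)"
    using v i nlap_carrier[of W F] nlap_index[of i W _ F]
    unfolding xs_def[symmetric]
    by (simp add: mult_mat_vec_def scalar_prod_def lessThan_atLeast0 row_def)
  also have "\<dots> = (\<Sum>j<length xs. complex_of_real (nlap_entry W F (xs ! i) (xs ! j)) * g (xs ! j))"
    using d s g by (auto intro!: sum.cong simp: find_index_nth)
  also have "\<dots> = (\<Sum>y\<in>W. complex_of_real (nlap_entry W F (xs ! i) y) * g y)"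
    using sum_nth_set[OF d, of "\<lambda>y. complex_of_real (nlap_entry W F (xs ! i) y) * g y"] s by simp
  finally show ?thesis .
qed

definition eigf :: "'v set \<Rightarrow> 'v set set \<Rightarrow> complex \<Rightarrow> ('v \<Rightarrow> complex) \<Rightarrow> bool" where
  "eigf W F z f \<longleftrightarrow> (\<forall>x\<in>W. (\<Sum>y\<in>W. complex_of_real (nlap_entry W F x y) * f y) = z * f x)"

lemma kernel_char:
  fixes F :: "'v set set" and W :: "'v set"
  defines "xs \<equiv> vertex_list W"
  assumes fin: "finite W" and v: "v \<in> carrier_vec (length xs)"
    and g: "\<And>y. y \<in> W \<Longrightarrow> g y = v $ find_index xs y"
  shows "v \<in> mat_kernel (char_matrix (map_mat complex_of_real (nlap W F)) z) \<longleftrightarrow> eigf W F z g"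
proof -
  from vertex_list[OF fin] have d: "distinct xs" and s: "set xs = W" unfolding xs_def by auto
  let ?C = "map_mat complex_of_real (nlap W F)"
  have C: "?C \<in> carrier_mat (length xs) (length xs)" using nlap_carrier[of W F] unfolding xs_def by simp
  have cm: "char_matrix ?C z \<in> carrier_mat (length xs) (length xs)" using C by simp
  have e: "(char_matrix ?C z *\<^sub>v v) $ i = (?C *\<^sub>v v) $ i - z * v $ i" if "i < length xs" for i
  proof -
    have "char_matrix ?C z *\<^sub>v v = ?C *\<^sub>v v + ((-z) \<cdot>\<^sub>m 1\<^sub>m (length xs)) *\<^sub>v v"
      unfolding char_matrix_def using C v by (simp add: add_mult_distrib_mat_vec)
    thus ?thesis using that v C by simp
  qed
  have "v \<in> mat_kernel (char_matrix ?C z) \<longleftrightarrow> (\<forall>i<length xs. (?C *\<^sub>v v) $ i = z * v $ i)"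
    unfolding mat_kernel_def using cm v e
    by (auto simp: vec_eq_iff)
  also have "\<dots> \<longleftrightarrow> (\<forall>i<length xs. (\<Sum>y\<in>W. complex_of_real (nlap_entry W F (xs ! i) y) * g y) = z * g (xs ! i))"
    using matvec_fun[OF fin v[unfolded xs_def] g[unfolded xs_def]] g d s unfolding xs_def[symmetric]
    by (auto simp: find_index_nth)
  also have "\<dots> \<longleftrightarrow> eigf W F z g"
    using all_set_conv_all_nth[of xs "\<lambda>x. (\<Sum>y\<in>W. complex_of_real (nlap_entry W F x y) * g y) = z * g x"] s
    unfolding eigf_def by simp
  finally show ?thesis .
qed

lemma lap_sum:
  fixes f :: "'v \<Rightarrow> complex"
  assumes fin: "finite W" and x: "x \<in> W" and nl: "{x,x} \<notin> F"
  shows "(\<Sum>y\<in>W. complex_of_real (nlap_entry W F x y) * f y)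
    = f x - (\<Sum>y\<in>{y\<in>W. {x,y}\<in>F}. f y / complex_of_real (sqrt (real (Defs.degree W F x) * real (Defs.degree W F y))))"
proof -
  have "(\<Sum>y\<in>W. complex_of_real (nlap_entry W F x y) * f y)
    = (\<Sum>y\<in>W. (if x = y then f y else 0)) - (\<Sum>y\<in>W. (if {x,y}\<in>F then f y / complex_of_real (sqrt (real (Defs.degree W F x) * real (Defs.degree W F y))) else 0))"
    unfolding sum_subtractf[symmetric] nlap_entry_def using nl
    by (intro sum.cong refl) (auto simp: divide_inverse of_real_inverse algebra_simps)
  also have "\<dots> = f x - (\<Sum>y\<in>{y\<in>W. {x,y}\<in>F}. f y / complex_of_real (sqrt (real (Defs.degree W F x) * real (Defs.degree W F y))))"
    using fin x by (simp add: sum.inter_filter)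
  finally show ?thesis .
qed



locale sg =
  fixes V :: "'a set" and E :: "'a set set" and k :: nat
  assumes simple: "simple_graph V E" and noiso: "no_isolated_vertices V E" and kpos: "k \<ge> 1"
begin

definition NG :: "'a \<Rightarrow> 'a set" where "NG u = {v \<in> V. {u,v} \<in> E}"

abbreviation "VS \<equiv> subdiv_vertices V E k"
abbreviation "ES \<equiv> subdiv_edges V E k"

lemma finV: "finite V" using simple unfolding simple_graph_def by auto

lemma edge: assumes "{u,v} \<in> E" shows "u \<in> V" "v \<in> V" "u \<noteq> v"
proof -
  from simple assms obtain a b where "{u,v} = {a,b}" "a \<noteq> b" "a \<in> V" "b \<in> V"
    unfolding simple_graph_def by blast
  thus "u \<in> V" "v \<in> V" "u \<noteq> v" by (auto simp: doubleton_eq_iff)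
qed

lemma edge_sym: "{u,v} \<in> E \<Longrightarrow> {v,u} \<in> E" by (simp add: insert_commute)

lemma noloop: "{u,u} \<notin> E" using edge by blast

lemma finNG: "finite (NG u)" using finV unfolding NG_def by auto

lemma degG: "Defs.degree V E u = card (NG u)" unfolding Defs.degree_def NG_def ..

lemma NG_pos: assumes "u \<in> V" shows "card (NG u) > 0"
proof -
  from noiso assms obtain e where e: "e \<in> E" "u \<in> e" unfolding no_isolated_vertices_def by blast
  from simple e obtain a b where ab: "e = {a,b}" "a \<noteq> b" "a \<in> V" "b \<in> V"
    unfolding simple_graph_def by blast
  have "NG u \<noteq> {}"
  proof (cases "u = a")
    case True thus ?thesis using ab e unfolding NG_def by auto
  next
    case False hence "u = b" using ab e by auto
    thus ?thesis using ab e unfolding NG_def by (auto simp: insert_commute)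
  qed
  thus ?thesis using finNG by (simp add: card_gt_0_iff)
qed

lemma finVS: "finite VS"
proof (rule finite_subset)
  show "VS \<subseteq> Inl ` V \<union> Inr ` (V \<times> V \<times> {..<k})"
    unfolding subdiv_vertices_def using edge by auto
  show "finite (Inl ` V \<union> Inr ` (V \<times> V \<times> {..<k}))" using finV by simp
qed

lemma VS_cases: assumes "x \<in> VS"
  obtains u where "u \<in> V" "x = Inl u" | u v i where "{u,v} \<in> E" "i < k" "x = Inr (u,v,i)"
  using assms unfolding subdiv_vertices_def by blast

lemma Inl_VS: "u \<in> V \<Longrightarrow> Inl u \<in> VS" unfolding subdiv_vertices_def by auto
lemma Inr_VS: "{u,v} \<in> E \<Longrightarrow> i < k \<Longrightarrow> Inr (u,v,i) \<in> VS" unfolding subdiv_vertices_def by auto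

lemma noloopS: "{x,x} \<notin> ES"
  unfolding subdiv_edges_def using edge noloop by (auto simp: doubleton_eq_iff)

lemma NS_Inl: assumes "u \<in> V"
  shows "{y \<in> VS. {Inl u, y} \<in> ES} = (\<lambda>(v,i). Inr (u,v,i)) ` (NG u \<times> {..<k})"
proof
  show "{y \<in> VS. {Inl u, y} \<in> ES} \<subseteq> (\<lambda>(v,i). Inr (u,v,i)) ` (NG u \<times> {..<k})"
  proof
    fix y assume "y \<in> {y \<in> VS. {Inl u, y} \<in> ES}"
    hence y: "{Inl u, y} \<in> ES" by auto
    then obtain a b i where "{Inl u, y} = {Inl a, Inr (a,b,i)}" "{a,b} \<in> E" "i < k"
      unfolding subdiv_edges_def by (auto simp: doubleton_eq_iff)
    thus "y \<in> (\<lambda>(v,i). Inr (u,v,i)) ` (NG u \<times> {..<k})"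
      using edge unfolding NG_def by (auto simp: doubleton_eq_iff)
  qed
  show "(\<lambda>(v,i). Inr (u,v,i)) ` (NG u \<times> {..<k}) \<subseteq> {y \<in> VS. {Inl u, y} \<in> ES}"
    unfolding NG_def subdiv_edges_def using Inr_VS by auto
qed

lemma NS_Inr: assumes "{u,v} \<in> E" "i < k"
  shows "{y \<in> VS. {Inr (u,v,i), y} \<in> ES} = {Inl u, Inr (v,u,i)}"
proof
  show "{y \<in> VS. {Inr (u,v,i), y} \<in> ES} \<subseteq> {Inl u, Inr (v,u,i)}"
    unfolding subdiv_edges_def by (auto simp: doubleton_eq_iff)
  show "{Inl u, Inr (v,u,i)} \<subseteq> {y \<in> VS. {Inr (u,v,i), y} \<in> ES}"
    using assms Inl_VS[OF edge(1)[OF assms(1)]] Inr_VS[OF edge_sym[OF assms(1)] assms(2)]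
    unfolding subdiv_edges_def by (auto simp: insert_commute)
qed

lemma degS_Inl: assumes "u \<in> V" shows "Defs.degree VS ES (Inl u) = card (NG u) * k"
proof -
  have "card ((\<lambda>(v,i). Inr (u,v,i) :: 'a + 'a \<times> 'a \<times> nat) ` (NG u \<times> {..<k})) = card (NG u \<times> {..<k})"
    by (rule card_image) (auto simp: inj_on_def)
  thus ?thesis unfolding Defs.degree_def NS_Inl[OF assms]
    by (simp add: card_cartesian_product)
qed

lemma degS_Inr: assumes "{u,v} \<in> E" "i < k" shows "Defs.degree VS ES (Inr (u,v,i)) = 2"
  unfolding Defs.degree_def NS_Inr[OF assms] by simp

end


lemma alg_term:
  fixes Au Av K Rr mu P Q D :: complex
  assumes "Au \<noteq> 0" "Av \<noteq> 0" "K \<noteq> 0" "Rr * Rr = 2" "D \<noteq> 0"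
  shows "(K*K) * ((4*mu*(P/(Au*K*Rr)) + 2*(Q/(Av*K*Rr)))/D)/(Au*K*Rr) = (2*mu*P/(Au*Au) + Q/(Au*Av))/D"
proof -
  have R: "Rr \<noteq> 0" using assms(4) by auto
  have "(K*K) * ((4*mu*(P/(Au*K*Rr)) + 2*(Q/(Av*K*Rr)))/D)/(Au*K*Rr) = (4*mu*P/(Au*Au) + 2*Q/(Au*Av))/(D*(Rr*Rr))"
    using assms R by (simp add: field_simps)
  also have "\<dots> = (2*mu*P/(Au*Au) + Q/(Au*Av))/D"
    using assms by (simp add: field_simps)
  finally show ?thesis .
qed

lemma alg_solve:
  fixes mu w1 w2 P Q :: complex
  assumes "mu*w1 = P + w2/2" "mu*w2 = Q + w1/2" "4*mu^2-1 \<noteq> 0"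
  shows "w1 = (4*mu*P + 2*Q)/(4*mu^2-1)"
proof -
  have "w1*(4*mu^2-1) = 4*mu*(mu*w1 - w2/2) + 2*(mu*w2 - w1/2)"
    by (simp add: algebra_simps power2_eq_square)
  also have "\<dots> = 4*mu*P + 2*Q" using assms by simp
  finally show ?thesis using assms(3) by (simp add: field_simps)
qed

lemma alg_inl:
  fixes mu p S :: complex
  assumes "4*mu^2-1 \<noteq> 0" "mu * p = (2*mu*p + S)/(4*mu^2-1)"
  shows "(4*mu^3-3*mu) * p = S"
proof -
  have "mu * p * (4*mu^2-1) = 2*mu*p + S" using assms by (simp add: field_simps)
  thus ?thesis by (simp add: algebra_simps power2_eq_square power3_eq_cube)
qed

lemma alg_inl2:
  fixes mu p S :: complex
  assumes "4*mu^2-1 \<noteq> 0" "(4*mu^3-3*mu) * p = S"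
  shows "mu * p = (2*mu*p + S)/(4*mu^2-1)"
proof -
  have "mu * p * (4*mu^2-1) = 2*mu*p + S" using assms(2)
    by (simp add: algebra_simps power2_eq_square power3_eq_cube)
  thus ?thesis using assms(1) by (simp add: field_simps)
qed

lemma alg_check:
  fixes mu P Q :: complex
  assumes "4*mu^2-1 \<noteq> 0"
  shows "mu * ((4*mu*P + 2*Q)/(4*mu^2-1)) = P + ((4*mu*Q + 2*P)/(4*mu^2-1))/2"
  using assms by (simp add: field_simps power2_eq_square)


context sg
begin

definition A :: "'a \<Rightarrow> complex" where "A u = complex_of_real (sqrt (real (card (NG u))))"
definition K :: complex where "K = complex_of_real (sqrt (real k))"
definition Rr :: complex where "Rr = complex_of_real (sqrt 2)"
definition cS :: "'a \<Rightarrow> complex" where "cS u = A u * K * Rr"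

lemma A_nz: "u \<in> V \<Longrightarrow> A u \<noteq> 0" using NG_pos unfolding A_def by fastforce
lemma AA: "A u * A u = of_nat (card (NG u))"
  unfolding A_def of_real_mult[symmetric] by simp
lemma K_nz: "K \<noteq> 0" using kpos unfolding K_def by auto
lemma KK: "K * K = of_nat k" unfolding K_def of_real_mult[symmetric] by simp
lemma RR: "Rr * Rr = 2" unfolding Rr_def of_real_mult[symmetric] by simp

lemma cS_eq1: "complex_of_real (sqrt (real (card (NG u) * k) * 2)) = cS u"
  unfolding cS_def A_def K_def Rr_def of_real_mult[symmetric]
  by (simp add: real_sqrt_mult)
lemma cS_eq2: "complex_of_real (sqrt (2 * real (card (NG u) * k))) = cS u"
  using cS_eq1 by (simp add: mult.commute)
lemma cS_eq1': "complex_of_real (sqrt (real (card (NG u)) * real k * 2)) = cS u"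
  using cS_eq1 by simp
lemma cS_eq2': "complex_of_real (sqrt (2 * (real (card (NG u)) * real k))) = cS u"
  using cS_eq2 by simp
lemma NG_E: "v \<in> NG u \<Longrightarrow> {u,v} \<in> E" unfolding NG_def by auto

lemma eq_G: assumes u: "u \<in> V"
  shows "(\<Sum>y\<in>V. complex_of_real (nlap_entry V E u y) * h y) = h u - (\<Sum>v\<in>NG u. h v / (A u * A v))"
proof -
  have "(\<Sum>y\<in>V. complex_of_real (nlap_entry V E u y) * h y)
     = h u - (\<Sum>y\<in>{y\<in>V. {u,y}\<in>E}. h y / complex_of_real (sqrt (real (Defs.degree V E u) * real (Defs.degree V E y))))"
    by (rule lap_sum[OF finV u noloop])
  also have "\<dots> = h u - (\<Sum>v\<in>NG u. h v / (A u * A v))"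
    unfolding degG NG_def[symmetric] A_def of_real_mult[symmetric] by (simp add: real_sqrt_mult)
  finally show ?thesis .
qed

lemma eq_Inl: assumes u: "u \<in> V"
  shows "(\<Sum>y\<in>VS. complex_of_real (nlap_entry VS ES (Inl u) y) * f y)
    = f (Inl u) - (\<Sum>v\<in>NG u. \<Sum>i<k. f (Inr (u,v,i))) / cS u"
proof -
  have inj: "inj_on (\<lambda>(v,i). Inr (u,v,i) :: 'a + 'a \<times> 'a \<times> nat) (NG u \<times> {..<k})"
    by (auto simp: inj_on_def)
  have "(\<Sum>y\<in>VS. complex_of_real (nlap_entry VS ES (Inl u) y) * f y)
     = f (Inl u) - (\<Sum>y\<in>{y\<in>VS. {Inl u,y}\<in>ES}. f y / complex_of_real (sqrt (real (Defs.degree VS ES (Inl u)) * real (Defs.degree VS ES y))))"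
    by (rule lap_sum[OF finVS Inl_VS[OF u] noloopS])
  also have "(\<Sum>y\<in>{y\<in>VS. {Inl u,y}\<in>ES}. f y / complex_of_real (sqrt (real (Defs.degree VS ES (Inl u)) * real (Defs.degree VS ES y))))
     = (\<Sum>(v,i)\<in>NG u \<times> {..<k}. f (Inr (u,v,i)) / cS u)"
    unfolding NS_Inl[OF u] sum.reindex[OF inj]
    by (rule sum.cong) (auto simp: degS_Inl[OF u] degS_Inr[OF NG_E] cS_eq1 cS_eq1')
  also have "\<dots> = (\<Sum>v\<in>NG u. \<Sum>i<k. f (Inr (u,v,i)) / cS u)"
    by (simp only: sum.cartesian_product)
  also have "\<dots> = (\<Sum>v\<in>NG u. \<Sum>i<k. f (Inr (u,v,i))) / cS u"
    by (simp add: sum_divide_distrib)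
  finally show ?thesis .
qed

lemma eq_Inr: assumes e: "{u,v} \<in> E" and i: "i < k"
  shows "(\<Sum>y\<in>VS. complex_of_real (nlap_entry VS ES (Inr (u,v,i)) y) * f y)
    = f (Inr (u,v,i)) - (f (Inl u) / cS u + f (Inr (v,u,i)) / 2)"
proof -
  have "(\<Sum>y\<in>VS. complex_of_real (nlap_entry VS ES (Inr (u,v,i)) y) * f y)
     = f (Inr (u,v,i)) - (\<Sum>y\<in>{y\<in>VS. {Inr (u,v,i),y}\<in>ES}. f y / complex_of_real (sqrt (real (Defs.degree VS ES (Inr (u,v,i))) * real (Defs.degree VS ES y))))"
    by (rule lap_sum[OF finVS Inr_VS[OF e i] noloopS])
  also have "(\<Sum>y\<in>{y\<in>VS. {Inr (u,v,i),y}\<in>ES}. f y / complex_of_real (sqrt (real (Defs.degree VS ES (Inr (u,v,i))) * real (Defs.degree VS ES y))))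
     = f (Inl u) / cS u + f (Inr (v,u,i)) / 2"
    unfolding NS_Inr[OF e i]
    using degS_Inr[OF e i] degS_Inr[OF edge_sym[OF e] i] degS_Inl[OF edge(1)[OF e]]
    by (simp add: cS_eq2 cS_eq2')
  finally show ?thesis .
qed

lemma eigS_iff:
  "eigf VS ES z f \<longleftrightarrow>
    (\<forall>u\<in>V. (1 - z) * f (Inl u) = (\<Sum>v\<in>NG u. \<Sum>i<k. f (Inr (u,v,i))) / cS u) \<and>
    (\<forall>u v i. {u,v} \<in> E \<longrightarrow> i < k \<longrightarrow> (1 - z) * f (Inr (u,v,i)) = f (Inl u) / cS u + f (Inr (v,u,i)) / 2)"
  (is "?L \<longleftrightarrow> ?R1 \<and> ?R2")
proof
  assume L: ?L
  show "?R1 \<and> ?R2"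
  proof
    show ?R1
    proof
      fix u assume u: "u \<in> V"
      from L Inl_VS[OF u] have "(\<Sum>y\<in>VS. complex_of_real (nlap_entry VS ES (Inl u) y) * f y) = z * f (Inl u)"
        unfolding eigf_def by blast
      thus "(1 - z) * f (Inl u) = (\<Sum>v\<in>NG u. \<Sum>i<k. f (Inr (u,v,i))) / cS u"
        unfolding eq_Inl[OF u] by (simp add: algebra_simps)
    qed
    show ?R2
    proof (intro allI impI)
      fix u v i assume e: "{u,v} \<in> E" and i: "i < k"
      from L Inr_VS[OF e i] have "(\<Sum>y\<in>VS. complex_of_real (nlap_entry VS ES (Inr (u,v,i)) y) * f y) = z * f (Inr (u,v,i))"
        unfolding eigf_def by blast
      thus "(1 - z) * f (Inr (u,v,i)) = f (Inl u) / cS u + f (Inr (v,u,i)) / 2"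
        unfolding eq_Inr[OF e i] by (simp add: algebra_simps)
    qed
  qed
next
  assume R: "?R1 \<and> ?R2"
  show ?L unfolding eigf_def
  proof
    fix x assume "x \<in> VS"
    thus "(\<Sum>y\<in>VS. complex_of_real (nlap_entry VS ES x y) * f y) = z * f x"
    proof (cases rule: VS_cases)
      case (1 u)
      from R 1 show ?thesis unfolding 1(2) eq_Inl[OF 1(1)] by (simp add: algebra_simps)
    next
      case (2 u v i)
      from R 2 show ?thesis unfolding 2(3) eq_Inr[OF 2(1,2)] by (simp add: algebra_simps)
    qed
  qed
qed

lemma eigG_iff:
  "eigf V E z h \<longleftrightarrow> (\<forall>u\<in>V. (1 - z) * h u = (\<Sum>v\<in>NG u. h v / (A u * A v)))"
  unfolding eigf_def
proof (intro ball_cong refl)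
  fix u assume u: "u \<in> V"
  show "((\<Sum>y\<in>V. complex_of_real (nlap_entry V E u y) * h y) = z * h u) \<longleftrightarrow>
    ((1 - z) * h u = (\<Sum>v\<in>NG u. h v / (A u * A v)))"
    unfolding eq_G[OF u] by (auto simp: algebra_simps)
qed

end


context sg
begin

definition ext :: "complex \<Rightarrow> ('a \<Rightarrow> complex) \<Rightarrow> ('a + 'a \<times> 'a \<times> nat) \<Rightarrow> complex" where
  "ext mu h x = (case x of Inl u \<Rightarrow> h u | Inr (u,v,i) \<Rightarrow> (4*mu*(h u / cS u) + 2*(h v / cS v))/(4*mu^2-1))"

lemma ext_Inl[simp]: "ext mu h (Inl u) = h u" unfolding ext_def by simp
lemma ext_Inr[simp]: "ext mu h (Inr (u,v,i)) = (4*mu*(h u / cS u) + 2*(h v / cS v))/(4*mu^2-1)"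
  unfolding ext_def by simp

lemma inl_sum:
  assumes u: "u \<in> V" and D: "4*mu^2-1 \<noteq> 0"
    and f: "\<And>v i. v \<in> NG u \<Longrightarrow> i < k \<Longrightarrow> f (Inr (u,v,i)) = (4*mu*(p u / cS u) + 2*(p v / cS v))/(4*mu^2-1)"
  shows "(\<Sum>v\<in>NG u. \<Sum>i<k. f (Inr (u,v,i))) / cS u = (2*mu*p u + (\<Sum>v\<in>NG u. p v / (A u * A v)))/(4*mu^2-1)"
proof -
  have "(\<Sum>v\<in>NG u. \<Sum>i<k. f (Inr (u,v,i))) / cS u
     = (\<Sum>v\<in>NG u. (K*K) * ((4*mu*(p u / (A u * K * Rr)) + 2*(p v / (A v * K * Rr)))/(4*mu^2-1)) / (A u * K * Rr))"
    unfolding sum_divide_distrib KK cS_def[symmetric]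
    by (rule sum.cong) (auto simp: f)
  also have "\<dots> = (\<Sum>v\<in>NG u. (2*mu*p u/(A u * A u) + p v/(A u * A v))/(4*mu^2-1))"
  proof (rule sum.cong[OF refl])
    fix v assume v: "v \<in> NG u"
    hence "v \<in> V" using edge NG_E by blast
    thus "(K*K) * ((4*mu*(p u / (A u * K * Rr)) + 2*(p v / (A v * K * Rr)))/(4*mu^2-1)) / (A u * K * Rr)
      = (2*mu*p u/(A u * A u) + p v/(A u * A v))/(4*mu^2-1)"
      by (intro alg_term A_nz u K_nz RR D)
  qed
  also have "\<dots> = (of_nat (card (NG u)) * (2*mu*p u/(A u * A u)) + (\<Sum>v\<in>NG u. p v / (A u * A v)))/(4*mu^2-1)"
    by (simp add: sum_divide_distrib[symmetric] sum.distrib)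
  also have "\<dots> = (2*mu*p u + (\<Sum>v\<in>NG u. p v / (A u * A v)))/(4*mu^2-1)"
    using NG_pos[OF u] unfolding AA by simp
  finally show ?thesis .
qed

lemma restrict:
  assumes D: "4*mu^2-1 \<noteq> 0" and mu: "mu = 1 - z" and z': "1 - z' = 4*mu^3 - 3*mu"
    and eig: "eigf VS ES z f"
  shows "\<forall>x\<in>VS. f x = ext mu (\<lambda>u. f (Inl u)) x" and "eigf V E z' (\<lambda>u. f (Inl u))"
proof -
  from eig[unfolded eigS_iff] have
    eInl: "\<And>u. u \<in> V \<Longrightarrow> mu * f (Inl u) = (\<Sum>v\<in>NG u. \<Sum>i<k. f (Inr (u,v,i))) / cS u" and
    eInr: "\<And>u v i. {u,v} \<in> E \<Longrightarrow> i < k \<Longrightarrow> mu * f (Inr (u,v,i)) = f (Inl u) / cS u + f (Inr (v,u,i)) / 2"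
    unfolding mu by auto
  have r: "f (Inr (u,v,i)) = (4*mu*(f (Inl u) / cS u) + 2*(f (Inl v) / cS v))/(4*mu^2-1)"
    if e: "{u,v} \<in> E" and i: "i < k" for u v i
    by (rule alg_solve[OF eInr[OF e i] eInr[OF edge_sym[OF e] i] D])
  show "\<forall>x\<in>VS. f x = ext mu (\<lambda>u. f (Inl u)) x"
  proof
    fix x assume "x \<in> VS"
    thus "f x = ext mu (\<lambda>u. f (Inl u)) x"
      by (cases rule: VS_cases) (auto simp: r)
  qed
  show "eigf V E z' (\<lambda>u. f (Inl u))"
    unfolding eigG_iff
  proof
    fix u assume u: "u \<in> V"
    have "mu * f (Inl u) = (2*mu*f (Inl u) + (\<Sum>v\<in>NG u. f (Inl v) / (A u * A v)))/(4*mu^2-1)"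
      unfolding eInl[OF u] by (rule inl_sum[OF u D r[OF NG_E]])
    from alg_inl[OF D this] show "(1 - z') * f (Inl u) = (\<Sum>v\<in>NG u. f (Inl v) / (A u * A v))"
      unfolding z' .
  qed
qed

lemma extend:
  assumes D: "4*mu^2-1 \<noteq> 0" and mu: "mu = 1 - z" and z': "1 - z' = 4*mu^3 - 3*mu"
    and eig: "eigf V E z' h"
  shows "eigf VS ES z (ext mu h)"
  unfolding eigS_iff mu[symmetric]
proof (intro conjI ballI allI impI)
  fix u assume u: "u \<in> V"
  from eig[unfolded eigG_iff z'] u have "(4*mu^3 - 3*mu) * h u = (\<Sum>v\<in>NG u. h v / (A u * A v))" by auto
  from alg_inl2[OF D this]
  show "mu * ext mu h (Inl u) = (\<Sum>v\<in>NG u. \<Sum>i<k. ext mu h (Inr (u,v,i))) / cS u"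
    unfolding inl_sum[OF u D, of "ext mu h" h, OF ext_Inr] by simp
next
  fix u v i assume "{u,v} \<in> E" "i < k"
  show "mu * ext mu h (Inr (u,v,i)) = ext mu h (Inl u) / cS u + ext mu h (Inr (v,u,i)) / 2"
    using alg_check[OF D, of "h u / cS u" "h v / cS v"] by (simp add: add.commute)
qed

end


context sg
begin

lemma ext_cong: assumes "\<And>u. u \<in> V \<Longrightarrow> h u = h' u" and "x \<in> VS"
  shows "ext mu h x = ext mu h' x"
  using assms(2)
proof (cases rule: VS_cases)
  case (2 u v i) thus ?thesis using assms(1) edge[OF 2(1)] by simp
qed (use assms in simp)

end

lemma find_index_lt: "x \<in> set xs \<Longrightarrow> find_index xs x < length xs"
  by (simp add: find_index_leq_length)

lemma sel_mat:
  fixes v :: "complex vec"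
  assumes d: "distinct xs" and v: "v \<in> carrier_vec (length xs)" and i: "i < n" and a: "a i \<in> set xs"
  shows "(mat n (length xs) (\<lambda>(i,j). if xs ! j = a i then 1 else 0) *\<^sub>v v) $ i = v $ find_index xs (a i)"
proof -
  have iff: "xs ! j = a i \<longleftrightarrow> j = find_index xs (a i)" if "j < length xs" for j
    using find_index_nth[OF d that] find_index_in_set[OF a] by auto
  have "(mat n (length xs) (\<lambda>(i,j). if xs ! j = a i then 1 else 0) *\<^sub>v v) $ i
    = (\<Sum>j<length xs. (if xs ! j = a i then 1 else 0) * v $ j)"
    using v i by (simp add: mult_mat_vec_def scalar_prod_def lessThan_atLeast0 row_def)
  also have "\<dots> = (\<Sum>j<length xs. (if j = find_index xs (a i) then 1 else 0) * v $ j)"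
    using iff by (intro sum.cong) auto
  also have "\<dots> = (\<Sum>j<length xs. if j = find_index xs (a i) then v $ j else 0)"
    by (intro sum.cong) auto
  also have "\<dots> = v $ find_index xs (a i)"
    using find_index_lt[OF a] by (simp add: sum.delta)
  finally show ?thesis .
qed

theorem lemma3p2:
  fixes V :: "'a set" and E :: "'a set set" and k :: nat and \<zeta> :: real
  assumes "simple_graph V E" and "connected_graph V E" and "no_isolated_vertices V E"
    and "k \<ge> 1"
    and "\<zeta> \<notin> {1/2, 3/2}"
    and "eigenvalue (nlap (subdiv_vertices V E k) (subdiv_edges V E k)) \<zeta>"
  shows "eigenvalue (nlap V E) (\<zeta> * (4 * \<zeta>^2 - 12 * \<zeta> + 9))
    \<and> order (\<zeta> * (4 * \<zeta>^2 - 12 * \<zeta> + 9)) (char_poly (nlap V E))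
      = order \<zeta> (char_poly (nlap (subdiv_vertices V E k) (subdiv_edges V E k)))"
proof -
  interpret sg V E k using assms by unfold_locales auto
  define xsS where "xsS = vertex_list VS"
  define xsG where "xsG = vertex_list V"
  define N where "N = length xsS"
  define n where "n = length xsG"
  define CS where "CS = map_mat complex_of_real (nlap VS ES)"
  define CG where "CG = map_mat complex_of_real (nlap V E)"
  define \<zeta>' where "\<zeta>' = \<zeta> * (4 * \<zeta>^2 - 12 * \<zeta> + 9)"
  define z where "z = complex_of_real \<zeta>"
  define z' where "z' = complex_of_real \<zeta>'"
  define mu where "mu = 1 - z"
  have dS: "distinct xsS" "set xsS = VS" using vertex_list[OF finVS] unfolding xsS_def by auto
  have dG: "distinct xsG" "set xsG = V" using vertex_list[OF finV] unfolding xsG_def by auto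
  have LS: "nlap VS ES \<in> carrier_mat N N" using nlap_carrier unfolding N_def xsS_def by blast
  have LG: "nlap V E \<in> carrier_mat n n" using nlap_carrier unfolding n_def xsG_def by blast
  have CSc: "CS \<in> carrier_mat N N" using LS unfolding CS_def by simp
  have CGc: "CG \<in> carrier_mat n n" using LG unfolding CG_def by simp
  have Dr: "4*(1-\<zeta>)^2 - 1 \<noteq> 0"
  proof
    assume "4*(1-\<zeta>)^2 - 1 = 0"
    hence "(2*\<zeta> - 1) * (2*\<zeta> - 3) = 0" by (simp add: algebra_simps power2_eq_square)
    thus False using assms(5) by auto
  qed
  have D: "4*mu^2-1 \<noteq> 0"
  proof -
    have "4*mu^2-1 = complex_of_real (4*(1-\<zeta>)^2 - 1)" unfolding mu_def z_def by simp
    thus ?thesis using Dr by (metis of_real_eq_0_iff)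
  qed
  have z'eq: "1 - z' = 4*mu^3 - 3*mu"
  proof -
    have "z' = z * (4*z^2 - 12*z + 9)" unfolding z'_def \<zeta>'_def z_def by simp
    thus ?thesis unfolding mu_def by (simp add: algebra_simps power2_eq_square power3_eq_cube)
  qed
  define R where "R = mat n N (\<lambda>(i,j). if xsS ! j = Inl (xsG ! i) then 1 else (0::complex))"
  have Rc: "R \<in> carrier_mat n N" unfolding R_def by simp
  have Rv: "(R *\<^sub>v v) $ i = v $ find_index xsS (Inl (xsG ! i))" if "v \<in> carrier_vec N" "i < n" for v i
    unfolding R_def N_def
    by (rule sel_mat[OF dS(1) that[unfolded N_def]]) (use that dS dG n_def Inl_VS in auto)
  have RvG: "(R *\<^sub>v v) $ find_index xsG u = v $ find_index xsS (Inl u)" if "v \<in> carrier_vec N" "u \<in> V" for v u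
    using Rv[OF that(1), of "find_index xsG u"] that dG find_index_lt find_index_in_set n_def by metis
  have kS: "v \<in> mat_kernel (char_matrix CS z) \<longleftrightarrow> eigf VS ES z g"
    if "v \<in> carrier_vec N" "\<And>y. y \<in> VS \<Longrightarrow> g y = v $ find_index xsS y" for v g
    unfolding CS_def by (rule kernel_char[OF finVS that[unfolded N_def xsS_def]])
  have kG: "w \<in> mat_kernel (char_matrix CG z') \<longleftrightarrow> eigf V E z' h"
    if "w \<in> carrier_vec n" "\<And>y. y \<in> V \<Longrightarrow> h y = w $ find_index xsG y" for w h
    unfolding CG_def by (rule kernel_char[OF finV that[unfolded n_def xsG_def]])
  have A1: "char_matrix CS z \<in> carrier_mat N N" using CSc by simp
  have A2: "char_matrix CG z' \<in> carrier_mat n n" using CGc by simp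
  have kerS_car: "v \<in> carrier_vec N" if "v \<in> mat_kernel (char_matrix CS z)" for v
    using that A1 by (auto simp: mat_kernel_def)
  have kerG_car: "w \<in> carrier_vec n" if "w \<in> mat_kernel (char_matrix CG z')" for w
    using that A2 by (auto simp: mat_kernel_def)
  have kdim: "kernel_dim (char_matrix CS z) = kernel_dim (char_matrix CG z')"
  proof (rule kernel_dim_iso[OF A1 A2 Rc])
    fix v assume vk: "v \<in> mat_kernel (char_matrix CS z)"
    have v: "v \<in> carrier_vec N" by (rule kerS_car[OF vk])
    have "eigf VS ES z (\<lambda>y. v $ find_index xsS y)" using kS[OF v, of "\<lambda>y. v $ find_index xsS y"] vk by simp
    from restrict(2)[OF D mu_def z'eq this]
    have "eigf V E z' (\<lambda>u. v $ find_index xsS (Inl u))" .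
    thus "R *\<^sub>v v \<in> mat_kernel (char_matrix CG z')"
      using kG[of "R *\<^sub>v v" "\<lambda>u. v $ find_index xsS (Inl u)"] Rc v RvG[OF v] by auto
  next
    show "inj_on ((*\<^sub>v) R) (mat_kernel (char_matrix CS z))"
    proof
      fix v v' assume vk: "v \<in> mat_kernel (char_matrix CS z)" and vk': "v' \<in> mat_kernel (char_matrix CS z)"
        and eq: "R *\<^sub>v v = R *\<^sub>v v'"
      have v: "v \<in> carrier_vec N" by (rule kerS_car[OF vk])
      have v': "v' \<in> carrier_vec N" by (rule kerS_car[OF vk'])
      have e1: "eigf VS ES z (\<lambda>y. v $ find_index xsS y)" using kS[OF v, of "\<lambda>y. v $ find_index xsS y"] vk by simp
      have e2: "eigf VS ES z (\<lambda>y. v' $ find_index xsS y)" using kS[OF v', of "\<lambda>y. v' $ find_index xsS y"] vk' by simp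
      have same: "v $ find_index xsS (Inl u) = v' $ find_index xsS (Inl u)" if "u \<in> V" for u
        using RvG[OF v that] RvG[OF v' that] eq by simp
      show "v = v'"
      proof (rule eq_vecI)
        show "dim_vec v = dim_vec v'" using v v' by simp
        fix j assume "j < dim_vec v'"
        hence j: "j < N" using v' by simp
        hence x: "xsS ! j \<in> VS" using dS N_def by auto
        have fj: "find_index xsS (xsS ! j) = j" using find_index_nth dS j N_def by blast
        have "v $ j = ext mu (\<lambda>u. v $ find_index xsS (Inl u)) (xsS ! j)"
          using restrict(1)[OF D mu_def z'eq e1] x fj by auto
        also have "\<dots> = ext mu (\<lambda>u. v' $ find_index xsS (Inl u)) (xsS ! j)"
          by (rule ext_cong[OF same x])
        also have "\<dots> = v' $ j"
          using restrict(1)[OF D mu_def z'eq e2] x fj by auto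
        finally show "v $ j = v' $ j" .
      qed
    qed
  next
    fix w assume wk: "w \<in> mat_kernel (char_matrix CG z')"
    have w: "w \<in> carrier_vec n" by (rule kerG_car[OF wk])
    define h where "h = (\<lambda>u. w $ find_index xsG u)"
    have eh: "eigf V E z' h" using kG[OF w, of h] wk unfolding h_def by blast
    have ee: "eigf VS ES z (ext mu h)" by (rule extend[OF D mu_def z'eq eh])
    define v where "v = vec N (\<lambda>j. ext mu h (xsS ! j))"
    have v: "v \<in> carrier_vec N" unfolding v_def by simp
    have gv: "ext mu h y = v $ find_index xsS y" if "y \<in> VS" for y
    proof -
      have "find_index xsS y < length xsS" "xsS ! find_index xsS y = y"
        using that dS find_index_lt[of y xsS] find_index_in_set[of y xsS] by auto
      thus ?thesis unfolding v_def N_def by simp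
    qed
    have vk: "v \<in> mat_kernel (char_matrix CS z)" using kS[OF v gv] ee by blast
    have "w = R *\<^sub>v v"
    proof (rule eq_vecI)
      show "dim_vec w = dim_vec (R *\<^sub>v v)" using w Rc by simp
      fix i assume "i < dim_vec (R *\<^sub>v v)"
      hence i: "i < n" using Rc by simp
      have xi: "xsG ! i \<in> V" using dG i n_def by auto
      have "(R *\<^sub>v v) $ i = v $ find_index xsS (Inl (xsG ! i))" by (rule Rv[OF v i])
      also have "\<dots> = h (xsG ! i)" using gv[OF Inl_VS[OF xi]] by simp
      also have "\<dots> = w $ i" unfolding h_def using find_index_nth dG i n_def by metis
      finally show "w $ i = (R *\<^sub>v v) $ i" by simp
    qed
    thus "\<exists>v\<in>mat_kernel (char_matrix CS z). w = R *\<^sub>v v" using vk by blast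
  qed
  interpret m: map_poly_inj_idom_divide_hom "complex_of_real" ..
  have hermS: "CS $$ (i,j) = conjugate (CS $$ (j,i))" if "i < N" "j < N" for i j
  proof -
    have "nlap_entry VS ES (xsS ! i) (xsS ! j) = nlap_entry VS ES (xsS ! j) (xsS ! i)" by (rule nlap_entry_sym)
    thus ?thesis using that LS unfolding CS_def by (simp add: nlap_index N_def xsS_def)
  qed
  have hermG: "CG $$ (i,j) = conjugate (CG $$ (j,i))" if "i < n" "j < n" for i j
  proof -
    have "nlap_entry V E (xsG ! i) (xsG ! j) = nlap_entry V E (xsG ! j) (xsG ! i)" by (rule nlap_entry_sym)
    thus ?thesis using that LG unfolding CG_def by (simp add: nlap_index n_def xsG_def)
  qed
  have oS: "order \<zeta> (char_poly (nlap VS ES)) = kernel_dim (char_matrix CS z)"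
  proof -
    have "order \<zeta> (char_poly (nlap VS ES)) = order z (char_poly CS)"
      unfolding CS_def z_def of_real_hom.char_poly_hom[OF LS] m.order_hom ..
    also have "\<dots> = kernel_dim (char_matrix CS z)"
    proof (rule herm_order[OF CSc hermS])
      show "conjugate z = z" unfolding z_def by simp
    qed
    finally show ?thesis .
  qed
  have oG: "order \<zeta>' (char_poly (nlap V E)) = kernel_dim (char_matrix CG z')"
  proof -
    have "order \<zeta>' (char_poly (nlap V E)) = order z' (char_poly CG)"
      unfolding CG_def z'_def of_real_hom.char_poly_hom[OF LG] m.order_hom ..
    also have "\<dots> = kernel_dim (char_matrix CG z')"
    proof (rule herm_order[OF CGc hermG])
      show "conjugate z' = z'" unfolding z'_def by simp
    qed
    finally show ?thesis .
  qed
  have ord: "order \<zeta>' (char_poly (nlap V E)) = order \<zeta> (char_poly (nlap VS ES))"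
    using oS oG kdim by simp
  have nzS: "char_poly (nlap VS ES) \<noteq> 0" using degree_monic_char_poly[OF LS] by auto
  have nzG: "char_poly (nlap V E) \<noteq> 0" using degree_monic_char_poly[OF LG] by auto
  have "poly (char_poly (nlap VS ES)) \<zeta> = 0" using assms(6) eigenvalue_root_char_poly[OF LS] by blast
  hence "order \<zeta> (char_poly (nlap VS ES)) \<noteq> 0" using nzS order_root by blast
  hence "order \<zeta>' (char_poly (nlap V E)) \<noteq> 0" using ord by simp
  hence "poly (char_poly (nlap V E)) \<zeta>' = 0" using order_root by blast
  hence "eigenvalue (nlap V E) \<zeta>'" using eigenvalue_root_char_poly[OF LG] by blast
  thus ?thesis using ord unfolding \<zeta>'_def by blast
qed


end
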